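(* Consider the filtered ring $\mathbf{Z}[x]/(x^4)$ with $x$ in filtration exactly $d$ for some $d\ge1$, and let $R$ be a filtered $\lambda$-ring structure on it. (1) If $\psi^p_R(x)\equiv px\pmod{x^2}$ for all primes $p$, then $R$ is isomorphic to the filtered $\lambda$-ring structure with $\psi^p(x)=(1+x)^p-1$ for all primes $p$. (2) If $\psi^p_R(x)\equiv p^2x\pmod{x^2}$ for all primes $p$, then $R$ is isomorphic to one of the following $60$ mutually non-isomorphic filtered $\lambda$-ring structures on $\mathbf{Z}[x]/(x^4)$: \[S(k,d_2)=\Bigl\{\psi^p(x)=p^2x+\frac{kp^2(p^2-1)}{12}x^2+d_px^3\Bigr\},\] where $k\in\{1,5\}$, $d_2\in\{0,2,4,\ldots,58\}$, and for odd primes $p$, \[d_p=\frac{p^2(p^4-1)d_2}{60}+\frac{k^2p^2(p^2-1)(p^2-4)}{360}.\] (3) If $\psi^p_R(x)\equiv b_px\pmod{x^2}$ with $b_p\ne0$ for all primes $p$, then there are only finitely many isomorphism classes of filtered $\lambda$-ring structures $S$ on $\mathbf{Z}[x]/(x^4)$ such that $\psi^p_S(x)\equiv b_px\pmod{x^2}$ for all primes $p$. (4) If $\psi^2_R(x)\equiv 0\pmod{x^2}$, then $R$ is of the form $S((c_p),(d_p))=\{\psi^p(x)=c_px^2+d_px^3\colon p\text{ prime}\}$. Any such collection of polynomials (with integers $c_p,d_p$) gives rise to a filtered $\lambda$-ring structure provided $\psi^p(x)\equiv x^p\pmod p$ for all primes $p$. Two such, $S((c_p),(d_p))$ and $S((\bar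 c_p),(\bar d_p))$, are isomorphic if and only if (i) $(c_p)=\pm(\bar c_p)$ and (ii) there exists an integer $\alpha$ with $\bar d_p=d_p+2c_p\alpha$ for all primes $p$.
   Context: A (special) $\lambda$-ring is a commutative ring with operations $\lambda^i$ satisfying the Atiyah–Tall axioms; a filtered $\lambda$-ring is a $\lambda$-ring with decreasing filtration by ideals $I^k$ closed under $\lambda^i$, $i\ge1$; isomorphisms are filtration-preserving $\lambda$-ring isomorphisms. The filtered ring $\mathbf{Z}[x]/(x^n)$ with $x$ in filtration $d$ has $I^k$ generated by the $x^j$ with $jd\ge k$. A filtered $\lambda$-ring structure $R$ on it is determined by its Adams operations on $x$, written $\psi^p_R(x)\in\mathbf{Z}[x]/(x^n)$ for primes $p$ (polynomials without constant term); a family of such polynomials defines a filtered $\lambda$-ring structure iff $\psi^p(\psi^q(x))=\psi^q(\psi^p(x))$ and $\psi^p(x)\equiv x^p\pmod p$ for all primes $p,q$. The notation $\{\psi^p(x)=\ldots\}$ denotes the filtered $\lambda$-ring structure with these Adams operations. *)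

theory Defs
  imports "HOL-Computational_Algebra.Polynomial" "HOL-Computational_Algebra.Primes"
begin

text \<open>The ring Z[x]/(x^4) is modelled by integer polynomials of degree < 4
(normal-form representatives); multiplication is followed by truncation.\<close>

definition trunc4 :: "int poly \<Rightarrow> int poly" where
  "trunc4 f = (\<Sum>i<4. monom (coeff f i) i)"

definition carrier4 :: "int poly set" where
  "carrier4 = {f. degree f < 4}"

text \<open>The ring endomorphism of Z[x]/(x^4) sending x to a (a without constant term):
y(x) is mapped to y(a), truncated.\<close>
definition adams_op :: "int poly \<Rightarrow> int poly \<Rightarrow> int poly" where
  "adams_op a y = trunc4 (pcompose y a)"

definition filt :: "nat \<Rightarrow> nat \<Rightarrow> int poly set" where
  "filt d k = {y \<in> carrier4. \<forall>j<4. j * d < k \<longrightarrow> coeff y j = 0}"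

text \<open>A filtered lambda-ring structure on Z[x]/(x^4), given by its Adams operations
psi p = psi^p(x) for primes p (values at non-primes are irrelevant).\<close>
definition lam_struct :: "(nat \<Rightarrow> int poly) \<Rightarrow> bool" where
  "lam_struct psi \<longleftrightarrow>
     (\<forall>p. prime p \<longrightarrow> degree (psi p) < 4 \<and> coeff (psi p) 0 = 0 \<and>
        (\<forall>i<4. coeff (psi p) i mod int p = coeff (monom 1 p :: int poly) i mod int p)) \<and>
     (\<forall>p q. prime p \<longrightarrow> prime q \<longrightarrow>
        adams_op (psi p) (psi q) = adams_op (psi q) (psi p))"

definition lam_iso :: "nat \<Rightarrow> (nat \<Rightarrow> int poly) \<Rightarrow> (nat \<Rightarrow> int poly) \<Rightarrow> bool" where
  "lam_iso d R S \<longleftrightarrow>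
     (\<exists>\<phi>. bij_betw \<phi> carrier4 carrier4 \<and>
        (\<forall>y\<in>carrier4. \<forall>z\<in>carrier4. \<phi> (y + z) = \<phi> y + \<phi> z \<and>
            \<phi> (trunc4 (y * z)) = trunc4 (\<phi> y * \<phi> z)) \<and>
        \<phi> 1 = 1 \<and>
        (\<forall>k. \<phi> ` filt d k = filt d k) \<and>
        (\<forall>p. prime p \<longrightarrow> (\<forall>y\<in>carrier4. \<phi> (adams_op (R p) y) = adams_op (S p) (\<phi> y))))"

definition struct_mult :: "nat \<Rightarrow> int poly" where
  "struct_mult p = trunc4 ((1 + [:0, 1:]) ^ p - 1)"

definition struct_S :: "int \<Rightarrow> int \<Rightarrow> nat \<Rightarrow> int poly" where
  "struct_S k d2 p =
     (let q = int p;
          dp = (if p = 2 then d2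
                else (q^2 * (q^4 - 1) * d2) div 60 + (k^2 * q^2 * (q^2 - 1) * (q^2 - 4)) div 360)
      in [:0, q^2, (k * q^2 * (q^2 - 1)) div 12, dp:])"

definition struct_cd :: "(nat \<Rightarrow> int) \<Rightarrow> (nat \<Rightarrow> int) \<Rightarrow> nat \<Rightarrow> int poly" where
  "struct_cd c e p = [:0, 0, c p, e p:]"

definition adams_cong :: "(nat \<Rightarrow> int poly) \<Rightarrow> bool" where
  "adams_cong psi \<longleftrightarrow> (\<forall>p. prime p \<longrightarrow>
     (\<forall>i<4. coeff (psi p) i mod int p = coeff (monom 1 p :: int poly) i mod int p))"

end

theory Submission
  imports Defs "HOL-Number_Theory.Cong"
begin


lemma coeff_trunc4: "coeff (trunc4 f) i = (if i < 4 then coeff f i else 0)"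
  unfolding trunc4_def by (simp add: coeff_sum coeff_monom)

lemma coeff_list4: "coeff [:a,b,c,d:] i = (if i = 0 then a else if i = 1 then b else if i = 2 then c else if i = 3 then d else 0)"
  by (cases i; cases "i - 1"; cases "i - 2"; cases "i-3"; auto simp: coeff_pCons split: nat.splits)

lemma trunc4_eq: "trunc4 f = [:coeff f 0, coeff f 1, coeff f 2, coeff f 3:]"
  by (simp add: poly_eq_iff coeff_trunc4 coeff_list4)

lemma tc: "trunc4 (pcompose [:f0,f1,f2,f3:] [:0,g1,g2,g3:]) =
   [:f0, f1*g1, f1*g2+f2*g1^2, f1*g3 + 2*f2*g1*g2 + f3*g1^3:]"
  apply (simp add: trunc4_eq pcompose_pCons eval_nat_numeral)
  apply (simp add: algebra_simps power2_eq_square power3_eq_cube)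
  done

lemma tm: "trunc4 ([:y0,y1,y2,y3:] * [:z0,z1,z2,z3:]) =
   [:y0*z0, y0*z1+y1*z0, y0*z2+y1*z1+y2*z0, y0*z3+y1*z2+y2*z1+y3*z0:]"
  by (simp add: trunc4_eq eval_nat_numeral algebra_simps)

lemma degree_list4: "degree [:a,b,c,d:] < 4"
proof -
  have "degree [:a,b,c,d:] \<le> 3"
    by (rule degree_le) (auto simp: coeff_list4)
  then show ?thesis by simp
qed

lemma trunc4_carrier: "trunc4 f \<in> carrier4"
  by (simp add: carrier4_def trunc4_eq degree_list4)

lemma list4_carrier: "[:a,b,c,d:] \<in> carrier4"
  by (simp add: carrier4_def degree_list4)

lemma carrier_form: "y \<in> carrier4 \<Longrightarrow> y = [:coeff y 0, coeff y 1, coeff y 2, coeff y 3:]"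
  unfolding carrier4_def
  by (auto simp: poly_eq_iff coeff_list4 intro!: coeff_eq_0)

lemma trunc4_id: "y \<in> carrier4 \<Longrightarrow> trunc4 y = y"
  using carrier_form[of y] by (metis trunc4_eq)

type_synonym tri = "int \<times> int \<times> int"

fun cmp :: "tri \<Rightarrow> tri \<Rightarrow> tri" where
  "cmp (f1,f2,f3) (g1,g2,g3) = (f1*g1, f1*g2+f2*g1^2, f1*g3 + 2*f2*g1*g2 + f3*g1^3)"

fun tp :: "tri \<Rightarrow> int poly" where
  "tp (a,b,c) = [:0,a,b,c:]"

definition trip :: "int poly \<Rightarrow> tri" where
  "trip f = (coeff f 1, coeff f 2, coeff f 3)"

lemma cmp_assoc: "cmp (cmp f g) h = cmp f (cmp g h)"
  by (cases f; cases g; cases h) (simp add: algebra_simps power2_eq_square power3_eq_cube)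

lemma cmp_id1[simp]: "cmp (1,0,0) f = f" and cmp_id2[simp]: "cmp f (1,0,0) = f"
  by (cases f; simp)+

lemma tp_inj: "tp f = tp g \<Longrightarrow> f = g"
  by (cases f; cases g; simp)

lemma trip_tp[simp]: "trip (tp f) = f"
  by (cases f; simp add: trip_def eval_nat_numeral)

lemma tp_carrier: "tp f \<in> carrier4"
  by (cases f; simp add: list4_carrier del: pCons_0_0)

definition Fp :: "int poly \<Rightarrow> tri \<Rightarrow> int poly" where
  "Fp y g = trunc4 (pcompose y (tp g))"

lemma Fp_expl: "Fp [:y0,y1,y2,y3:] (g1,g2,g3) =
   [:y0, y1*g1, y1*g2+y2*g1^2, y1*g3 + 2*y2*g1*g2 + y3*g1^3:]"
  by (simp add: Fp_def tc del: pCons_0_0)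

lemma Fp_tp: "Fp (tp f) g = tp (cmp f g)"
  by (cases f; cases g) (simp add: Fp_def tc del: pCons_0_0)

lemma Fp_carrier: "Fp y g \<in> carrier4"
  by (simp add: Fp_def trunc4_carrier)

lemma Fp_comp: "y \<in> carrier4 \<Longrightarrow> Fp (Fp y g) h = Fp y (cmp g h)"
  apply (subst (1 2) carrier_form[of y], assumption)
  apply (cases g; cases h)
  apply (simp add: Fp_expl del: pCons_0_0)
  apply (simp add: algebra_simps power2_eq_square power3_eq_cube)
  done

lemma Fp_id: "y \<in> carrier4 \<Longrightarrow> Fp y (1,0,0) = y"
  apply (subst (1 2) carrier_form[of y], assumption)
  apply (simp add: Fp_expl del: pCons_0_0)
  done

lemma Fp_add: "Fp (y + z) g = Fp y g + Fp z g"
  by (simp add: Fp_def pcompose_add trunc4_eq)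

lemma Fp_mult: "y \<in> carrier4 \<Longrightarrow> z \<in> carrier4 \<Longrightarrow>
   Fp (trunc4 (y * z)) g = trunc4 (Fp y g * Fp z g)"
  apply (subst (1 2) carrier_form[of y], assumption)
  apply (subst (1 2) carrier_form[of z], assumption)
  apply (cases g)
  apply (simp only: tm Fp_expl)
  apply (simp add: algebra_simps power2_eq_square power3_eq_cube del: pCons_0_0)
  done

lemma Fp_one: "Fp 1 g = 1"
  by (simp add: Fp_def trunc4_eq pcompose_1)

lemma Fp_filt: "y \<in> filt d k \<Longrightarrow> Fp y g \<in> filt d k"
proof -
  assume y: "y \<in> filt d k"
  then have yc: "y \<in> carrier4" and yz: "\<And>j. j < 4 \<Longrightarrow> j * d < k \<Longrightarrow> coeff y j = 0"
    by (auto simp: filt_def)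
  obtain g1 g2 g3 where g: "g = (g1,g2,g3)" by (cases g)
  have e: "Fp y g = [:coeff y 0, coeff y 1*g1, coeff y 1*g2+coeff y 2*g1^2, coeff y 1*g3 + 2*coeff y 2*g1*g2 + coeff y 3*g1^3:]"
    using carrier_form[OF yc] Fp_expl g by metis
  have "coeff (Fp y g) j = 0" if "j < 4" "j * d < k" for j
  proof -
    have le: "i \<le> j \<Longrightarrow> coeff y i = 0" for i
      using yz[of i] that mult_le_mono1[of i j d] by fastforce
    show ?thesis using that le[of 0] le[of 1] le[of 2] le[of 3]
      by (auto simp: e coeff_list4)
  qed
  then show ?thesis by (simp add: filt_def Fp_carrier)
qed

lemma adams_Fp: "adams_op (tp s) y = Fp y s"
  by (simp add: adams_op_def Fp_def)

definition inv3 :: "tri \<Rightarrow> tri" where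
  "inv3 g = (case g of (e,a,b) \<Rightarrow> (e, -e*a, 2*e*a^2 - b))"

lemma inv3_l: "e = 1 \<or> e = -1 \<Longrightarrow> cmp (inv3 (e,a,b)) (e,a,b) = (1,0,0)"
  by (auto simp: inv3_def algebra_simps power2_eq_square power3_eq_cube)

lemma inv3_r: "e = 1 \<or> e = -1 \<Longrightarrow> cmp (e,a,b) (inv3 (e,a,b)) = (1,0,0)"
  by (auto simp: inv3_def algebra_simps power2_eq_square power3_eq_cube)

lemma iso_C:
  assumes e: "e = 1 \<or> e = -1"
    and h: "\<forall>p. prime p \<longrightarrow> S p = tp (s p) \<and> T p = tp (t p) \<and> cmp (s p) (e,a,b) = cmp (e,a,b) (t p)"
  shows "lam_iso d S T"
proof -
  define g where "g = (e,a,b)"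
  define \<phi> where "\<phi> y = Fp y g" for y
  have bij: "bij_betw \<phi> carrier4 carrier4"
  proof (rule bij_betw_byWitness[where f' = "\<lambda>y. Fp y (inv3 g)"])
    show "\<forall>y\<in>carrier4. Fp (\<phi> y) (inv3 g) = y"
      using e by (simp add: \<phi>_def Fp_comp g_def inv3_r Fp_id)
    show "\<forall>y\<in>carrier4. \<phi> (Fp y (inv3 g)) = y"
      using e by (simp add: \<phi>_def Fp_comp g_def inv3_l Fp_id)
  qed (auto simp: \<phi>_def Fp_carrier)
  have filt: "\<phi> ` filt d k = filt d k" for k
  proof
    show "\<phi> ` filt d k \<subseteq> filt d k" by (auto simp: \<phi>_def Fp_filt)
    show "filt d k \<subseteq> \<phi> ` filt d k"
    proof
      fix z assume z: "z \<in> filt d k"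
      then have zc: "z \<in> carrier4" by (simp add: filt_def)
      have "z = \<phi> (Fp z (inv3 g))"
        using e zc by (simp add: \<phi>_def Fp_comp g_def inv3_l Fp_id)
      moreover have "Fp z (inv3 g) \<in> filt d k" using z by (rule Fp_filt)
      ultimately show "z \<in> \<phi> ` filt d k" by blast
    qed
  qed
  have ad: "\<phi> (adams_op (S p) y) = adams_op (T p) (\<phi> y)" if "prime p" "y \<in> carrier4" for p y
  proof -
    have "\<phi> (adams_op (S p) y) = Fp y (cmp (s p) g)"
      using h that by (simp add: \<phi>_def adams_Fp Fp_comp)
    also have "\<dots> = Fp y (cmp g (t p))" using h that by (simp add: g_def)
    also have "\<dots> = adams_op (T p) (\<phi> y)"
      using h that by (simp add: \<phi>_def adams_Fp Fp_comp)
    finally show ?thesis .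
  qed
  show ?thesis unfolding lam_iso_def
    apply (rule exI[of _ \<phi>])
    using bij filt ad by (auto simp: \<phi>_def Fp_add Fp_mult Fp_one)
qed




lemma smult_carrier: "y \<in> carrier4 \<Longrightarrow> smult k y \<in> carrier4"
  unfolding carrier4_def using degree_smult_le[of k y] by simp

lemma add_carrier: "y \<in> carrier4 \<Longrightarrow> z \<in> carrier4 \<Longrightarrow> y + z \<in> carrier4"
  unfolding carrier4_def using degree_add_le[of y 3 z] by simp

lemma iso_D:
  assumes iso: "lam_iso d S T" and d: "d \<ge> 1"
    and h: "\<forall>p. prime p \<longrightarrow> S p = tp (s p) \<and> T p = tp (t p)"
  shows "\<exists>e a b. (e = 1 \<or> e = -1) \<and> (\<forall>p. prime p \<longrightarrow> cmp (s p) (e,a,b) = cmp (e,a,b) (t p))"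
proof -
  obtain \<phi> where bij: "bij_betw \<phi> carrier4 carrier4"
    and hom: "\<forall>y\<in>carrier4. \<forall>z\<in>carrier4. \<phi> (y + z) = \<phi> y + \<phi> z \<and>
            \<phi> (trunc4 (y * z)) = trunc4 (\<phi> y * \<phi> z)"
    and one: "\<phi> 1 = 1"
    and fi: "\<forall>k. \<phi> ` filt d k = filt d k"
    and ad: "\<forall>p. prime p \<longrightarrow> (\<forall>y\<in>carrier4. \<phi> (adams_op (S p) y) = adams_op (T p) (\<phi> y))"
    using iso unfolding lam_iso_def by blast
  define X :: "int poly" where "X = [:0,1:]"
  have Xc: "X \<in> carrier4" using list4_carrier[of 0 1 0 0] by (simp add: X_def)
  have Xf: "X \<in> filt d 1" using Xc d by (auto simp: filt_def X_def)
  have gf: "\<phi> X \<in> filt d 1" using fi Xf by blast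
  then have gc: "\<phi> X \<in> carrier4" and g0': "\<forall>j<4. j * d < 1 \<longrightarrow> coeff (\<phi> X) j = 0"
    unfolding filt_def by blast+
  have g0: "coeff (\<phi> X) 0 = 0" using g0'[rule_format, of 0] by simp
  define g1 where "g1 = coeff (\<phi> X) 1"
  define g2 where "g2 = coeff (\<phi> X) 2"
  define g3 where "g3 = coeff (\<phi> X) 3"
  have gX: "\<phi> X = [:0,g1,g2,g3:]" using carrier_form[OF gc] g0 by (simp add: g1_def g2_def g3_def)
  have p0: "\<phi> 0 = 0"
  proof -
    have z0: "(0::int poly) \<in> carrier4" by (simp add: carrier4_def)
    have "\<phi> (0 + 0) = \<phi> 0 + \<phi> 0" using hom z0 by blast
    then show ?thesis by simp
  qed
  have pneg: "\<phi> (- y) = - \<phi> y" if "y \<in> carrier4" for y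
  proof -
    have "-y \<in> carrier4" using that by (simp add: carrier4_def)
    then have "\<phi> (y + - y) = \<phi> y + \<phi> (-y)" using hom that by blast
    then show ?thesis using p0 by (simp add: eq_neg_iff_add_eq_0)
  qed
  have psn: "\<phi> (smult (int n) y) = smult (int n) (\<phi> y)" if "y \<in> carrier4" for n y
  proof (induction n)
    case 0 then show ?case using p0 by simp
  next
    case (Suc n)
    have "smult (int (Suc n)) y = y + smult (int n) y" by (simp add: smult_add_left)
    moreover have "\<phi> (y + smult (int n) y) = \<phi> y + \<phi> (smult (int n) y)"
      using hom that smult_carrier[OF that] by blast
    ultimately have "\<phi> (smult (int (Suc n)) y) = \<phi> y + \<phi> (smult (int n) y)" by simp
    then show ?case using Suc by (simp add: smult_add_left)
  qed
  have ps: "\<phi> (smult k y) = smult k (\<phi> y)" if "y \<in> carrier4" for k y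
  proof (cases "k \<ge> 0")
    case True then show ?thesis using psn[OF that, of "nat k"] by simp
  next
    case False
    then have "smult k y = - smult (int (nat (-k))) y" by simp
    then show ?thesis using pneg psn[OF that, of "nat (-k)"] smult_carrier[OF that] False by simp
  qed
  define X2 :: "int poly" where "X2 = [:0,0,1:]"
  define X3 :: "int poly" where "X3 = [:0,0,0,1:]"
  have X2c: "X2 \<in> carrier4" using list4_carrier[of 0 0 1 0] by (simp add: X2_def)
  have X3c: "X3 \<in> carrier4" using list4_carrier[of 0 0 0 1] by (simp add: X3_def)
  have X2e: "X2 = trunc4 (X * X)" by (simp add: X2_def X_def trunc4_eq eval_nat_numeral)
  have X3e: "X3 = trunc4 (X * X2)" by (simp add: X3_def X2_def X_def trunc4_eq eval_nat_numeral)
  have hadd: "\<And>y z. y\<in>carrier4 \<Longrightarrow> z\<in>carrier4 \<Longrightarrow> \<phi> (y + z) = \<phi> y + \<phi> z"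
    using hom by blast
  have hmul: "\<And>y z. y\<in>carrier4 \<Longrightarrow> z\<in>carrier4 \<Longrightarrow> \<phi> (trunc4 (y * z)) = trunc4 (\<phi> y * \<phi> z)"
    using hom by blast
  have pX2: "\<phi> X2 = [:0,0,g1^2, 2*g1*g2:]"
  proof -
    have "\<phi> X2 = trunc4 ([:0,g1,g2,g3:] * [:0,g1,g2,g3:])" using X2e hmul[OF Xc Xc] gX by simp
    also have "\<dots> = [:0,0,g1^2, 2*g1*g2:]" unfolding tm by (simp add: power2_eq_square)
    finally show ?thesis .
  qed
  have pX3: "\<phi> X3 = [:0,0,0,g1^3:]"
  proof -
    have "\<phi> X3 = trunc4 ([:0,g1,g2,g3:] * [:0,0,g1^2, 2*g1*g2:])" using X3e hmul[OF Xc X2c] gX pX2 by simp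
    also have "\<dots> = [:0,0,0,g1^3:]" unfolding tm by (simp add: power3_eq_cube power2_eq_square)
    finally show ?thesis .
  qed
  have onec: "(1::int poly) \<in> carrier4" by (simp add: carrier4_def)
  have form: "\<phi> y = Fp y (g1,g2,g3)" if yc: "y \<in> carrier4" for y
  proof -
    define y0 where "y0 = coeff y 0"
    define y1 where "y1 = coeff y 1"
    define y2 where "y2 = coeff y 2"
    define y3 where "y3 = coeff y 3"
    have ye: "y = [:y0,y1,y2,y3:]" using carrier_form[OF yc] by (simp add: y0_def y1_def y2_def y3_def)
    have dec: "y = smult y0 1 + smult y1 X + smult y2 X2 + smult y3 X3"
      by (simp add: ye X_def X2_def X3_def)
    have c1: "smult y0 1 \<in> carrier4" by (rule smult_carrier, rule onec)
    have c2: "smult y1 X \<in> carrier4" by (rule smult_carrier, rule Xc)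
    have c3: "smult y2 X2 \<in> carrier4" by (rule smult_carrier, rule X2c)
    have c4: "smult y3 X3 \<in> carrier4" by (rule smult_carrier, rule X3c)
    have "\<phi> y = \<phi> (smult y0 1) + \<phi> (smult y1 X) + \<phi> (smult y2 X2) + \<phi> (smult y3 X3)"
    proof -
      have a1: "smult y0 1 + smult y1 X \<in> carrier4" using c1 c2 add_carrier by blast
      have a2: "smult y0 1 + smult y1 X + smult y2 X2 \<in> carrier4" using a1 c3 add_carrier by blast
      have "\<phi> y = \<phi> (smult y0 1 + smult y1 X + smult y2 X2) + \<phi> (smult y3 X3)"
        using dec hadd[OF a2 c4] by simp
      also have "\<phi> (smult y0 1 + smult y1 X + smult y2 X2) = \<phi> (smult y0 1 + smult y1 X) + \<phi> (smult y2 X2)"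
        using hadd[OF a1 c3] by simp
      also have "\<phi> (smult y0 1 + smult y1 X) = \<phi> (smult y0 1) + \<phi> (smult y1 X)"
        using hadd[OF c1 c2] by simp
      finally show ?thesis .
    qed
    also have "\<dots> = smult y0 1 + smult y1 [:0,g1,g2,g3:] + smult y2 [:0,0,g1^2, 2*g1*g2:] + smult y3 [:0,0,0,g1^3:]"
      using ps[OF onec] ps[OF Xc] ps[OF X2c] ps[OF X3c] one gX pX2 pX3 by simp
    also have "\<dots> = Fp y (g1,g2,g3)"
      by (simp add: ye Fp_expl algebra_simps)
    finally show ?thesis .
  qed
  have "X \<in> \<phi> ` carrier4" using bij Xc by (simp add: bij_betw_def)
  then obtain y where yc: "y \<in> carrier4" and yX: "\<phi> y = X" by blast
  have "coeff (\<phi> y) 1 = coeff y 1 * g1"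
    using form[OF yc] carrier_form[OF yc] Fp_expl[of "coeff y 0" "coeff y 1" "coeff y 2" "coeff y 3" g1 g2 g3]
    by (simp add: coeff_list4)
  then have "coeff y 1 * g1 = 1" using yX by (simp add: X_def)
  then have e: "g1 = 1 \<or> g1 = -1" by (auto simp: zmult_eq_1_iff)
  have "cmp (s p) (g1,g2,g3) = cmp (g1,g2,g3) (t p)" if "prime p" for p
  proof -
    have Xt: "X = tp (1,0,0)" by (simp add: X_def)
    have "adams_op (S p) X = adams_op (tp (s p)) (tp (1,0,0))" using h that Xt by simp
    also have "\<dots> = tp (s p)" by (simp only: adams_Fp Fp_tp cmp_id1)
    finally have "adams_op (S p) X = tp (s p)" .
    then have "\<phi> (tp (s p)) = adams_op (T p) (\<phi> X)" using ad[rule_format, OF that Xc] by simp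
    then have "Fp (tp (s p)) (g1,g2,g3) = Fp (tp (g1,g2,g3)) (t p)"
      using form tp_carrier h that gX by (simp add: adams_Fp)
    moreover have "Fp (tp (g1,g2,g3)) (t p) = tp (cmp (g1,g2,g3) (t p))" by (rule Fp_tp)
    ultimately have "tp (cmp (s p) (g1,g2,g3)) = tp (cmp (g1,g2,g3) (t p))" by (simp add: Fp_tp)
    then show ?thesis by (rule tp_inj)
  qed
  then show ?thesis using e by blast
qed



lemma ls_form: "lam_struct R \<Longrightarrow> prime p \<Longrightarrow> R p = tp (trip (R p))"
proof -
  assume "lam_struct R" "prime p"
  then have "R p \<in> carrier4" "coeff (R p) 0 = 0" unfolding lam_struct_def carrier4_def by auto
  then show ?thesis using carrier_form[of "R p"] by (simp add: trip_def)
qed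

lemma ls_comm: "lam_struct R \<Longrightarrow> prime p \<Longrightarrow> prime q \<Longrightarrow>
   cmp (trip (R p)) (trip (R q)) = cmp (trip (R q)) (trip (R p))"
proof -
  assume l: "lam_struct R" and p: "prime p" and q: "prime q"
  have "adams_op (R p) (R q) = adams_op (R q) (R p)" using l p q unfolding lam_struct_def by blast
  then have "adams_op (tp (trip (R p))) (tp (trip (R q))) = adams_op (tp (trip (R q))) (tp (trip (R p)))"
    using ls_form[OF l p] ls_form[OF l q] by simp
  then have "tp (cmp (trip (R q)) (trip (R p))) = tp (cmp (trip (R p)) (trip (R q)))"
    by (simp only: adams_Fp Fp_tp)
  then show ?thesis using tp_inj by metis
qed

lemma ls_cong: "lam_struct R \<Longrightarrow> prime p \<Longrightarrow> i < 4 \<Longrightarrow>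
    coeff (R p) i mod int p = (if p = i then 1 else 0) mod int p"
  unfolding lam_struct_def by (simp add: coeff_monom)

lemma fst_cmp: "fst (cmp f g) = fst f * fst g"
  by (cases f; cases g; simp)

lemma uniq:
  assumes "fst u = fst v" "cmp u w = cmp w u" "cmp v w = cmp w v"
    "fst w - fst w^2 \<noteq> 0" "fst w - fst w^3 \<noteq> 0"
  shows "u = v"
proof -
  obtain x y1 z1 where u: "u = (x,y1,z1)" by (cases u)
  obtain y2 z2 where v: "v = (x,y2,z2)" using assms(1) u by (cases v) auto
  obtain A c d where w: "w = (A,c,d)" by (cases w)
  have e1: "x*c + y1*A^2 = A*y1 + c*x^2" "x*d + 2*y1*A*c + z1*A^3 = A*z1 + 2*c*x*y1 + d*x^3"
    using assms(2) by (simp_all add: u w)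
  have e2: "x*c + y2*A^2 = A*y2 + c*x^2" "x*d + 2*y2*A*c + z2*A^3 = A*z2 + 2*c*x*y2 + d*x^3"
    using assms(3) by (simp_all add: v w)
  have N1: "A - A^2 \<noteq> 0" and N3: "A - A^3 \<noteq> 0" using assms(4,5) w by simp_all
  have "(y1 - y2) * (A - A^2) = 0" using e1(1) e2(1) by (simp add: algebra_simps)
  then have yy: "y1 = y2" using N1 by simp
  have "(z1 - z2) * (A - A^3) = 0" using e1(2) e2(2) yy by (simp add: algebra_simps)
  then have "z1 = z2" using N3 by simp
  then show ?thesis using u v yy by simp
qed

lemma conj_unique:
  fixes s t :: "nat \<Rightarrow> tri"
  assumes e: "e = 1 \<or> e = -1"
    and fs: "\<forall>p. prime p \<longrightarrow> fst (s p) = fst (t p)"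
    and cs: "\<forall>p. prime p \<longrightarrow> cmp (s p) (s 2) = cmp (s 2) (s p)"
    and ct: "\<forall>p. prime p \<longrightarrow> cmp (t p) (t 2) = cmp (t 2) (t p)"
    and N: "fst (s 2) - fst (s 2)^2 \<noteq> 0" "fst (s 2) - fst (s 2)^3 \<noteq> 0"
    and h2: "cmp (s 2) (e,a,b) = cmp (e,a,b) (t 2)"
  shows "\<forall>p. prime p \<longrightarrow> cmp (s p) (e,a,b) = cmp (e,a,b) (t p)"
proof (intro allI impI)
  fix p :: nat assume p: "prime p"
  define g where "g = (e,a,b)"
  define gi where "gi = inv3 g"
  have l: "cmp gi g = (1,0,0)" and r: "cmp g gi = (1,0,0)" using inv3_l[OF e] inv3_r[OF e] by (simp_all add: g_def gi_def)
  have l': "cmp gi (cmp g z) = z" for z using l by (metis cmp_assoc cmp_id1)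
  have r': "cmp g (cmp gi z) = z" for z using r by (metis cmp_assoc cmp_id1)
  define u where "u q = cmp gi (cmp (s q) g)" for q :: nat
  have u2: "u 2 = t 2" using h2 l' by (simp add: u_def g_def)
  have fu: "fst (u q) = fst (s q)" for q
    using e by (auto simp: u_def fst_cmp g_def gi_def inv3_def)
  have cu: "cmp (u q) (u 2) = cmp (u 2) (u q)" if "prime q" for q
  proof -
    have "cmp (u q) (u 2) = cmp gi (cmp (cmp (s q) (s 2)) g)"
      by (simp add: u_def cmp_assoc r')
    also have "\<dots> = cmp gi (cmp (cmp (s 2) (s q)) g)" using cs that by simp
    also have "\<dots> = cmp (u 2) (u q)" by (simp add: u_def cmp_assoc r')
    finally show ?thesis .
  qed
  have t2: "prime (2::nat)" by simp
  have "u p = t p"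
  proof (rule uniq[where w = "t 2"])
    show "fst (u p) = fst (t p)" using fu fs p by simp
    show "cmp (u p) (t 2) = cmp (t 2) (u p)" using cu[OF p] u2 by simp
    show "cmp (t p) (t 2) = cmp (t 2) (t p)" using ct p by simp
    show "fst (t 2) - fst (t 2)^2 \<noteq> 0" "fst (t 2) - fst (t 2)^3 \<noteq> 0"
      using N fs t2 by simp_all
  qed
  moreover have "cmp (s p) g = cmp g (u p)" by (simp add: u_def r')
  ultimately show "cmp (s p) (e,a,b) = cmp (e,a,b) (t p)" by (simp add: g_def)
qed



lemma S_comm_id:
  fixes P Q k d2 gp gq up uq wp wq :: int
  assumes "12*gp = P*(P-1)" "12*gq = Q*(Q-1)" "60*up = P*(P^2-1)" "60*uq = Q*(Q^2-1)"
    "360*wp = P*(P-1)*(P-4)" "360*wq = Q*(Q-1)*(Q-4)"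
  shows "P*(uq*d2+k^2*wq) + 2*(k*gp)*Q*(k*gq) + (up*d2+k^2*wp)*Q^3 = Q*(up*d2+k^2*wp) + 2*(k*gq)*P*(k*gp) + (uq*d2+k^2*wq)*P^3"
proof -
  have "21600 * (P*(uq*d2+k^2*wq) + 2*(k*gp)*Q*(k*gq) + (up*d2+k^2*wp)*Q^3) = 21600 * (Q*(up*d2+k^2*wp) + 2*(k*gq)*P*(k*gp) + (uq*d2+k^2*wq)*P^3)"
    using assms by algebra
  then show ?thesis by simp
qed

lemma ch2: "2 * int (n choose 2) = int n * (int n - 1)"
proof (induction n)
  case 0 then show ?case by simp
next
  case (Suc n)
  have "Suc n choose 2 = n + (n choose 2)" by (simp add: numeral_2_eq_2)
  then show ?case using Suc by (simp add: algebra_simps)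
qed

lemma ch3: "6 * int (n choose 3) = int n * (int n - 1) * (int n - 2)"
proof (induction n)
  case 0 then show ?case by simp
next
  case (Suc n)
  have "Suc n choose 3 = (n choose 2) + (n choose 3)" by (simp add: numeral_3_eq_3 numeral_2_eq_2)
  then show ?case using Suc ch2[of n] by (simp add: algebra_simps)
qed



lemma fst_trip: "fst (trip f) = coeff f 1" by (simp add: trip_def)

lemma norm_iso:
  fixes t :: "nat \<Rightarrow> tri"
  assumes S: "lam_struct S" and e: "e = 1 \<or> e = -1"
    and T: "\<forall>p. prime p \<longrightarrow> T p = tp (t p)"
    and ct: "\<forall>p. prime p \<longrightarrow> cmp (t p) (t 2) = cmp (t 2) (t p)"
    and fs: "\<forall>p. prime p \<longrightarrow> coeff (S p) 1 = fst (t p)"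
    and N: "coeff (S 2) 1 - (coeff (S 2) 1)^2 \<noteq> 0" "coeff (S 2) 1 - (coeff (S 2) 1)^3 \<noteq> 0"
    and h2: "cmp (trip (S 2)) (e,a,b) = cmp (e,a,b) (t 2)"
  shows "lam_iso d S T"
proof -
  have t2: "prime (2::nat)" by simp
  have "\<forall>p. prime p \<longrightarrow> cmp (trip (S p)) (e,a,b) = cmp (e,a,b) (t p)"
  proof (rule conj_unique[OF e])
    show "\<forall>p. prime p \<longrightarrow> fst (trip (S p)) = fst (t p)" using fs by (simp add: fst_trip)
    show "\<forall>p. prime p \<longrightarrow> cmp (trip (S p)) (trip (S 2)) = cmp (trip (S 2)) (trip (S p))"
      using ls_comm[OF S _ t2] by blast
    show "\<forall>p. prime p \<longrightarrow> cmp (t p) (t 2) = cmp (t 2) (t p)" by (rule ct)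
    show "fst (trip (S 2)) - fst (trip (S 2))^2 \<noteq> 0" "fst (trip (S 2)) - fst (trip (S 2))^3 \<noteq> 0"
      using N by (simp_all add: fst_trip)
    show "cmp (trip (S 2)) (e,a,b) = cmp (e,a,b) (t 2)" by (rule h2)
  qed
  then show ?thesis
    using iso_C[OF e, of S "\<lambda>p. trip (S p)" T t a b d] ls_form[OF S] T by blast
qed

lemma norm_iso_ls:
  assumes S: "lam_struct S" and T: "lam_struct T" and e: "e = 1 \<or> e = -1"
    and fs: "\<forall>p. prime p \<longrightarrow> coeff (S p) 1 = coeff (T p) 1"
    and N: "coeff (S 2) 1 - (coeff (S 2) 1)^2 \<noteq> 0" "coeff (S 2) 1 - (coeff (S 2) 1)^3 \<noteq> 0"
    and h2: "cmp (trip (S 2)) (e,a,b) = cmp (e,a,b) (trip (T 2))"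
  shows "lam_iso d S T"
proof -
  have T1: "\<forall>p. prime p \<longrightarrow> T p = tp (trip (T p))" using ls_form[OF T] by blast
  have T2: "\<forall>p. prime p \<longrightarrow> cmp (trip (T p)) (trip (T 2)) = cmp (trip (T 2)) (trip (T p))"
    using ls_comm[OF T _ two_is_prime_nat] by blast
  have T3: "\<forall>p. prime p \<longrightarrow> coeff (S p) 1 = fst (trip (T p))" using fs by (simp add: fst_trip)
  show ?thesis by (rule norm_iso[OF S e T1 T2 T3 N h2])
qed

lemma part4a:
  assumes l: "lam_struct R" and h: "coeff (R 2) 1 = 0"
  shows "\<exists>c e. \<forall>p. prime p \<longrightarrow> R p = struct_cd c e p"
proof -
  have x0: "coeff (R p) 1 = 0" if p: "prime p" for p
  proof -
    define x where "x = coeff (R p) 1"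
    define y where "y = coeff (R p) 2"
    define z where "z = coeff (R p) 3"
    define c2 where "c2 = coeff (R 2) 2"
    define d2 where "d2 = coeff (R 2) 3"
    have sp: "trip (R p) = (x,y,z)" by (simp add: trip_def x_def y_def z_def)
    have s2: "trip (R 2) = (0,c2,d2)" using h by (simp add: trip_def c2_def d2_def)
    have "cmp (x,y,z) (0,c2,d2) = cmp (0,c2,d2) (x,y,z)"
      using ls_comm[OF l p two_is_prime_nat] sp s2 by simp
    then have e1: "x*c2 = c2*x^2" by simp
    have "c2 mod 2 = 1" using ls_cong[OF l two_is_prime_nat, of 2] by (simp add: c2_def)
    then have "c2 \<noteq> 0" by auto
    then have "x = x^2" using e1 by (simp add: mult.commute)
    then have x01: "x = 0 \<or> x = 1" by (simp add: power2_eq_square)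
    have "x mod int p = 0" using ls_cong[OF l p, of 1] prime_gt_1_nat[OF p] by (simp add: x_def)
    moreover have "(1::int) mod int p = 1" using prime_gt_1_nat[OF p] by simp
    ultimately have "x \<noteq> 1" by auto
    then show ?thesis using x01 x_def by simp
  qed
  show ?thesis
  proof (intro exI allI impI)
    fix p :: nat assume p: "prime p"
    show "R p = struct_cd (\<lambda>p. coeff (R p) 2) (\<lambda>p. coeff (R p) 3) p"
      using ls_form[OF l p] x0[OF p] by (simp add: struct_cd_def trip_def)
  qed
qed

lemma cd_tp: "struct_cd c e p = tp (0, c p, e p)" by (simp add: struct_cd_def)

lemma part4b:
  assumes "adams_cong (struct_cd c e)"
  shows "lam_struct (struct_cd c e)"
proof -
  have "adams_op (struct_cd c e p) (struct_cd c e q) = adams_op (struct_cd c e q) (struct_cd c e p)" for p q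
    unfolding cd_tp adams_Fp Fp_tp by simp
  moreover have "degree (struct_cd c e p) < 4" for p by (simp add: struct_cd_def degree_list4 del: pCons_0_0)
  ultimately show ?thesis using assms unfolding lam_struct_def adams_cong_def
    by (simp add: struct_cd_def)
qed

lemma part4c:
  assumes d: "d \<ge> 1"
  shows "lam_iso d (struct_cd c e) (struct_cd cb eb) \<longleftrightarrow>
           (((\<forall>p. prime p \<longrightarrow> cb p = c p) \<or> (\<forall>p. prime p \<longrightarrow> cb p = - c p)) \<and>
            (\<exists>\<alpha>::int. \<forall>p. prime p \<longrightarrow> eb p = e p + 2 * c p * \<alpha>))"
proof
  assume iso: "lam_iso d (struct_cd c e) (struct_cd cb eb)"
  obtain g a b where g: "g = 1 \<or> g = -1"
    and h: "\<forall>p. prime p \<longrightarrow> cmp (0, c p, e p) (g,a,b) = cmp (g,a,b) (0, cb p, eb p)"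
    using iso_D[OF iso d, of "\<lambda>p. (0, c p, e p)" "\<lambda>p. (0, cb p, eb p)"] cd_tp by blast
  have hp: "c p = g * cb p \<and> 2 * c p * g * a + e p * g^3 = g * eb p" if "prime p" for p
  proof -
    have "cmp (0, c p, e p) (g,a,b) = cmp (g,a,b) (0, cb p, eb p)" using h that by blast
    then have h1: "c p * g^2 = g * cb p" and h2: "2 * c p * g * a + e p * g^3 = g * eb p"
      by (simp_all add: algebra_simps)
    have "g^2 = 1" using g by auto
    then show ?thesis using h1 h2 by simp
  qed
  have gg: "g * g = 1" using g by auto
  have A: "(\<forall>p. prime p \<longrightarrow> cb p = c p) \<or> (\<forall>p. prime p \<longrightarrow> cb p = - c p)"
    using g hp by auto
  have B: "\<forall>p. prime p \<longrightarrow> eb p = e p + 2 * c p * a"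
  proof (intro allI impI)
    fix p :: nat assume p: "prime p"
    have e2: "2 * c p * g * a + e p * g^3 = g * eb p" using hp[OF p] by blast
    from g show "eb p = e p + 2 * c p * a"
    proof
      assume "g = 1" then show ?thesis using e2 by simp
    next
      assume "g = -1" then show ?thesis using e2 by simp
    qed
  qed
  show "(((\<forall>p. prime p \<longrightarrow> cb p = c p) \<or> (\<forall>p. prime p \<longrightarrow> cb p = - c p)) \<and>
            (\<exists>\<alpha>::int. \<forall>p. prime p \<longrightarrow> eb p = e p + 2 * c p * \<alpha>))" using A B by blast
next
  assume "(((\<forall>p. prime p \<longrightarrow> cb p = c p) \<or> (\<forall>p. prime p \<longrightarrow> cb p = - c p)) \<and>
            (\<exists>\<alpha>::int. \<forall>p. prime p \<longrightarrow> eb p = e p + 2 * c p * \<alpha>))"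
  then obtain g \<alpha> where g: "g = 1 \<or> g = (-1::int)" and hc: "\<forall>p. prime p \<longrightarrow> cb p = g * c p"
    and he: "\<forall>p. prime p \<longrightarrow> eb p = e p + 2 * c p * \<alpha>"
    by (metis mult_1 mult_minus1)
  show "lam_iso d (struct_cd c e) (struct_cd cb eb)"
  proof (rule iso_C[OF g, where s = "\<lambda>p. (0, c p, e p)" and t = "\<lambda>p. (0, cb p, eb p)" and a = \<alpha> and b = 0])
    show "\<forall>p. prime p \<longrightarrow> struct_cd c e p = tp (0, c p, e p) \<and> struct_cd cb eb p = tp (0, cb p, eb p) \<and>
        cmp (0, c p, e p) (g, \<alpha>, 0) = cmp (g, \<alpha>, 0) (0, cb p, eb p)"
      using g hc he by (auto simp: cd_tp algebra_simps)
  qed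
qed



lemma coeff_11_power: "coeff ([:1,1:] ^ n :: int poly) i = int (n choose i)"
proof (cases "i \<le> n")
  case True then show ?thesis using coeff_linear_poly_power[OF True, of 1 1] by simp
next
  case False
  have "degree ([:1,1:] ^ n :: int poly) \<le> degree ([:1,1:] :: int poly) * n" by (rule degree_power_le)
  then have "degree ([:1,1:] ^ n :: int poly) < i" using False by simp
  then show ?thesis using False by (simp add: coeff_eq_0)
qed

lemma M_form: "struct_mult p = tp (int p, int (p choose 2), int (p choose 3))"
proof -
  have e: "1 + [:0, 1:] = ([:1,1:] :: int poly)" by (simp add: one_pCons)
  show ?thesis unfolding struct_mult_def e trunc4_eq
    by (simp add: coeff_11_power)
qed

lemma int_dvd_mod: "(p::nat) dvd n \<Longrightarrow> int n mod int p = 0"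
  by (metis int_dvd_int_iff dvd_imp_mod_0)

lemma M_ls: "lam_struct struct_mult"
  unfolding lam_struct_def
proof (intro conjI allI impI)
  fix p :: nat assume p: "prime p"
  have p1: "p > 1" using prime_gt_1_nat[OF p] .
  show "degree (struct_mult p) < 4" using tp_carrier by (simp add: M_form carrier4_def del: tp.simps)
  show "coeff (struct_mult p) 0 = 0" by (simp add: M_form)
  {
    fix i :: nat assume i: "i < 4"
    have c2: "int (p choose 2) mod int p = 0" if "p \<noteq> 2"
      using dvd_choose_prime[of 2 p] p p1 that by (intro int_dvd_mod) simp
    have c3: "int (p choose 3) mod int p = 0" if "p \<noteq> 3"
    proof (cases "p = 2")
      case True then show ?thesis by (simp add: binomial_eq_0)
    next
      case False then show ?thesis
        using dvd_choose_prime[of 3 p] p p1 that by (intro int_dvd_mod) simp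
    qed
    have "i = 0 \<or> i = 1 \<or> i = 2 \<or> i = 3" using i by auto
    then show "coeff (struct_mult p) i mod int p = coeff (monom 1 p :: int poly) i mod int p"
      using p1 c2 c3 by (auto simp: M_form coeff_monom eval_nat_numeral)
  }
next
  fix p q :: nat assume p: "prime p" and q: "prime q"
  define P where "P = int p"
  define Q where "Q = int q"
  have a: "2 * int (p choose 2) = P * (P - 1)" "2 * int (q choose 2) = Q * (Q - 1)"
    "6 * int (p choose 3) = P * (P - 1) * (P - 2)" "6 * int (q choose 3) = Q * (Q - 1) * (Q - 2)"
    using ch2 ch3 by (simp_all add: P_def Q_def)
  have "cmp (Q, int (q choose 2), int (q choose 3)) (P, int (p choose 2), int (p choose 3)) =
        cmp (P, int (p choose 2), int (p choose 3)) (Q, int (q choose 2), int (q choose 3))"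
  proof -
    have e2: "2 * (Q * int (p choose 2) + int (q choose 2) * P^2) = 2 * (P * int (q choose 2) + int (p choose 2) * Q^2)"
      using a by algebra
    have e3: "6 * (Q * int (p choose 3) + 2 * int (q choose 2) * P * int (p choose 2) + int (q choose 3) * P^3) =
              6 * (P * int (q choose 3) + 2 * int (p choose 2) * Q * int (q choose 2) + int (p choose 3) * Q^3)"
      using a by algebra
    show ?thesis using e2 e3 by (simp add: algebra_simps)
  qed
  then show "adams_op (struct_mult p) (struct_mult q) = adams_op (struct_mult q) (struct_mult p)"
    unfolding M_form adams_Fp Fp_tp P_def Q_def by simp
qed

lemma part1:
  assumes R: "lam_struct R" and h: "\<forall>p. prime p \<longrightarrow> coeff (R p) 1 = int p"
  shows "lam_iso d R struct_mult"
proof -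
  have t2: "prime (2::nat)" and t3: "prime (3::nat)" by simp_all
  define c where "c = coeff (R 2) 2"
  define dd where "dd = coeff (R 2) 3"
  define c3 where "c3 = coeff (R 3) 2"
  define d3 where "d3 = coeff (R 3) 3"
  have s2: "trip (R 2) = (2, c, dd)" using h t2 by (simp add: trip_def c_def dd_def)
  have s3: "trip (R 3) = (3, c3, d3)" using h t3 by (simp add: trip_def c3_def d3_def)
  have "cmp (3, c3, d3) (2, c, dd) = cmp (2, c, dd) (3, c3, d3)"
    using ls_comm[OF R t3 t2] s2 s3 by simp
  then have e1: "3*c + c3*4 = 2*c3 + c*9" and e2: "3*dd + 2*c3*2*c + d3*8 = 2*d3 + 2*c*3*c3 + dd*27"
    by (simp_all add: power2_eq_square power3_eq_cube)
  have c3e: "c3 = 3*c" using e1 by simp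
  have d3e: "d3 = 4*dd + c^2" using e2 unfolding c3e by (simp add: power2_eq_square algebra_simps)
  have cm: "c mod 2 = 1" using ls_cong[OF R t2, of 2] by (simp add: c_def)
  have dm: "dd mod 2 = 0" using ls_cong[OF R t2, of 3] by (simp add: dd_def)
  have d3m: "d3 mod 3 = 1" using ls_cong[OF R t3, of 3] by (simp add: d3_def)
  obtain a where ca: "c = 2*a + 1" using cm by (metis mod_div_mult_eq add.commute mult.commute)
  obtain d' where dd': "dd = 2*d'" using dm by (metis dvd_def mod_0_imp_dvd)
  define X where "X = 2*d' + a^2 + a"
  have "4*dd + c^2 = 4*X + 1" by (simp add: X_def ca dd' power2_eq_square algebra_simps)
  then have "(4*X + 1) mod 3 = 1" using d3m d3e by simp
  then have "\<exists>m. X = 3*m" by presburger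
  then obtain m where Xm: "X = 3*m" by blast
  define b where "b = 2*m - d' - a"
  show ?thesis
  proof (rule norm_iso_ls[OF R M_ls, where e = 1 and a = a and b = b])
    show "(1::int) = 1 \<or> (1::int) = -1" by simp
    show "\<forall>p. prime p \<longrightarrow> coeff (R p) 1 = coeff (struct_mult p) 1" using h by (simp add: M_form)
    show "coeff (R 2) 1 - (coeff (R 2) 1)^2 \<noteq> 0" "coeff (R 2) 1 - (coeff (R 2) 1)^3 \<noteq> 0"
      using h t2 by simp_all
    have m2: "trip (struct_mult 2) = (2, 1, 0)" by (simp only: M_form trip_tp) (simp add: binomial_eq_0)
    have "12*m = 8*d' + 4*a^2 + 4*a" using Xm X_def by simp
    then show "cmp (trip (R 2)) (1, a, b) = cmp (1, a, b) (trip (struct_mult 2))"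
      unfolding s2 m2 by (simp add: ca dd' b_def power2_eq_square algebra_simps)
  qed
qed



lemma conj_family:
  fixes s :: "nat \<Rightarrow> tri" and e a b :: int
  assumes e: "e = 1 \<or> e = -1"
    and cs: "\<forall>p. prime p \<longrightarrow> cmp (s p) (s 2) = cmp (s 2) (s p)"
  defines "u \<equiv> \<lambda>q. cmp (inv3 (e,a,b)) (cmp (s q) (e,a,b))"
  shows "fst (u q) = fst (s q)" "prime q \<Longrightarrow> cmp (u q) (u 2) = cmp (u 2) (u q)"
    "cmp (s q) (e,a,b) = cmp (e,a,b) (u q)"
proof -
  define g where "g = (e,a,b)"
  define gi where "gi = inv3 g"
  have r: "cmp g gi = (1,0,0)" using inv3_r[OF e] by (simp_all add: g_def gi_def)
  have r': "cmp g (cmp gi z) = z" for z using r by (metis cmp_assoc cmp_id1)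
  have ud: "u q = cmp gi (cmp (s q) g)" for q by (simp add: u_def g_def gi_def)
  show "fst (u q) = fst (s q)"
    using e by (auto simp: ud fst_cmp g_def gi_def inv3_def)
  show "cmp (u q) (u 2) = cmp (u 2) (u q)" if "prime q"
  proof -
    have "cmp (u q) (u 2) = cmp gi (cmp (cmp (s q) (s 2)) g)"
      by (simp add: ud cmp_assoc r')
    also have "\<dots> = cmp gi (cmp (cmp (s 2) (s q)) g)" using cs that by simp
    also have "\<dots> = cmp (u 2) (u q)" by (simp add: ud cmp_assoc r')
    finally show ?thesis .
  qed
  show "cmp (s q) (e,a,b) = cmp (e,a,b) (u q)" by (simp add: ud r' g_def[symmetric])
qed

lemma part3:
  assumes R: "lam_struct R" and nz: "\<forall>p. prime p \<longrightarrow> coeff (R p) 1 \<noteq> 0"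
  shows "\<exists>F. finite F \<and>
           (\<forall>S. lam_struct S \<and> (\<forall>p. prime p \<longrightarrow> coeff (S p) 1 = coeff (R p) 1) \<longrightarrow>
                (\<exists>T\<in>F. lam_iso d S T))"
proof -
  define A where "A = coeff (R 2) 1"
  have A0: "A \<noteq> 0" using nz by (simp add: A_def)
  have Am: "A mod 2 = 0" using ls_cong[OF R two_is_prime_nat, of 1] by (simp add: A_def)
  have A1: "A \<noteq> 1" "A \<noteq> -1" using Am by auto
  define N1 where "N1 = A - A^2"
  define N3 where "N3 = A - A^3"
  have N1z: "N1 \<noteq> 0"
  proof
    assume "N1 = 0"
    then have "A * (1 - A) = 0" by (simp add: N1_def power2_eq_square algebra_simps)
    then show False using A0 A1 by simp
  qed
  have N3z: "N3 \<noteq> 0"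
  proof
    assume "N3 = 0"
    then have "A * ((1 - A) * (1 + A)) = 0" by (simp add: N3_def power3_eq_cube algebra_simps)
    then show False using A0 A1 by auto
  qed
  define P where "P t u v \<longleftrightarrow> (\<forall>p. prime p \<longrightarrow> fst (t p) = coeff (R p) 1) \<and>
      (\<forall>p. prime p \<longrightarrow> cmp (t p) (t 2) = cmp (t 2) (t p)) \<and> t 2 = (A,u,v)" for t :: "nat \<Rightarrow> tri" and u v
  define G where "G u v = (SOME t. P t u v)" for u v
  define F where "F = (\<lambda>(u,v). \<lambda>p. tp (G u v p)) ` ({-\<bar>N1\<bar>..\<bar>N1\<bar>} \<times> {-\<bar>N3\<bar>..\<bar>N3\<bar>})"
  have fin: "finite F" by (simp add: F_def)
  have main: "\<exists>T\<in>F. lam_iso d S T" if S: "lam_struct S" and fs: "\<forall>p. prime p \<longrightarrow> coeff (S p) 1 = coeff (R p) 1" for S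
  proof -
    define s where "s q = trip (S q)" for q
    define c where "c = coeff (S 2) 2"
    define dd where "dd = coeff (S 2) 3"
    have s2: "s 2 = (A, c, dd)" using fs by (simp add: s_def trip_def c_def dd_def A_def)
    define a where "a = - (c div N1)"
    define u where "u = c + a * N1"
    define Z where "Z = dd + 2*c*a - 2*a*A*u"
    define b where "b = - (Z div N3)"
    define v where "v = Z + b * N3"
    have ue: "u = c mod N1" by (simp add: u_def a_def minus_div_mult_eq_mod[symmetric] algebra_simps)
    have ve: "v = Z mod N3" by (simp add: v_def b_def minus_div_mult_eq_mod[symmetric] algebra_simps)
    have ur: "u \<in> {-\<bar>N1\<bar>..\<bar>N1\<bar>}" using abs_mod_less[OF N1z, of c] ue by auto
    have vr: "v \<in> {-\<bar>N3\<bar>..\<bar>N3\<bar>}" using abs_mod_less[OF N3z, of Z] ve by auto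
    have e1: "(1::int) = 1 \<or> (1::int) = -1" by simp
    have cs: "\<forall>p. prime p \<longrightarrow> cmp (s p) (s 2) = cmp (s 2) (s p)"
      using ls_comm[OF S _ two_is_prime_nat] by (simp add: s_def)
    define w where "w = (\<lambda>q. cmp (inv3 (1,a,b)) (cmp (s q) (1,a,b)))"
    have cf1: "fst (w q) = fst (s q)" for q
      using conj_family(1)[OF e1 cs, where a = a and b = b] by (simp add: w_def)
    have cf2: "cmp (w q) (w 2) = cmp (w 2) (w q)" if "prime q" for q
      using conj_family(2)[OF e1 cs that, where a = a and b = b] by (simp add: w_def)
    have h2: "cmp (s 2) (1,a,b) = cmp (1,a,b) (A,u,v)"
      unfolding s2 by (simp add: u_def v_def Z_def N1_def N3_def algebra_simps power2_eq_square power3_eq_cube)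
    have w2: "w 2 = (A,u,v)"
    proof -
      have "w 2 = cmp (inv3 (1,a,b)) (cmp (s 2) (1,a,b))" by (simp only: w_def)
      also have "\<dots> = cmp (inv3 (1,a,b)) (cmp (1,a,b) (A,u,v))" by (simp only: h2)
      also have "\<dots> = (A,u,v)" by (simp only: cmp_assoc[symmetric] inv3_l[OF e1] cmp_id1)
      finally show ?thesis .
    qed
    have Pw: "P w u v"
      unfolding P_def using cf1 cf2 w2 fs by (simp add: s_def fst_trip)
    then have PG: "P (G u v) u v" unfolding G_def by (rule someI[where P = "\<lambda>t. P t u v"])
    have iso: "lam_iso d S (\<lambda>p. tp (G u v p))"
    proof (rule norm_iso[OF S e1])
      show "\<forall>p. prime p \<longrightarrow> tp (G u v p) = tp (G u v p)" by simp
      show "\<forall>p. prime p \<longrightarrow> cmp (G u v p) (G u v 2) = cmp (G u v 2) (G u v p)" using PG unfolding P_def by blast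
      show "\<forall>p. prime p \<longrightarrow> coeff (S p) 1 = fst (G u v p)" using PG fs by (simp add: P_def)
      show "coeff (S 2) 1 - (coeff (S 2) 1)^2 \<noteq> 0" "coeff (S 2) 1 - (coeff (S 2) 1)^3 \<noteq> 0"
        using fs N1z N3z by (simp_all add: N1_def N3_def A_def)
      show "cmp (trip (S 2)) (1, a, b) = cmp (1, a, b) (G u v 2)"
        using h2 PG by (simp add: P_def s_def)
    qed
    moreover have "(\<lambda>p. tp (G u v p)) \<in> F" using ur vr by (auto simp: F_def)
    ultimately show ?thesis by blast
  qed
  show ?thesis using fin main by blast
qed



lemma dvd_by_res:
  fixes q :: int and m :: int and f :: "int \<Rightarrow> int"
  assumes m: "m > 0" and f: "\<And>r. 0 \<le> r \<Longrightarrow> r < m \<Longrightarrow> f r mod m = 0"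
    and c: "\<And>x y. [x = y] (mod m) \<Longrightarrow> [f x = f y] (mod m)"
  shows "m dvd f q"
proof -
  have "[q mod m = q] (mod m)" by (simp add: cong_def)
  then have "[f (q mod m) = f q] (mod m)" by (rule c)
  moreover have "f (q mod m) mod m = 0" using f m by simp
  ultimately show ?thesis by (simp add: cong_def dvd_eq_mod_eq_0)
qed

lemma dA8: "(8::int) dvd q^2*(q^2-1)*(q^2-4)"
proof (rule dvd_by_res[where f = "\<lambda>Q. Q^2*(Q^2-1)*(Q^2-4)"])
  show "[x^2*(x^2-1)*(x^2-4) = y^2*(y^2-1)*(y^2-4)] (mod 8)" if "[x = y] (mod 8)" for x y :: int
    using that by (intro cong_mult cong_diff cong_pow cong_refl)
  show "(r^2*(r^2-1)*(r^2-4)) mod 8 = 0" if "0 \<le> r" "r < 8" for r :: int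
  proof -
    have "r = 0 \<or> r = 1 \<or> r = 2 \<or> r = 3 \<or> r = 4 \<or> r = 5 \<or> r = 6 \<or> r = 7" using that by arith
    then show ?thesis by (elim disjE) simp_all
  qed
qed simp

lemma dA9: "(9::int) dvd q^2*(q^2-1)*(q^2-4)"
proof (rule dvd_by_res[where f = "\<lambda>Q. Q^2*(Q^2-1)*(Q^2-4)"])
  show "[x^2*(x^2-1)*(x^2-4) = y^2*(y^2-1)*(y^2-4)] (mod 9)" if "[x = y] (mod 9)" for x y :: int
    using that by (intro cong_mult cong_diff cong_pow cong_refl)
  show "(r^2*(r^2-1)*(r^2-4)) mod 9 = 0" if "0 \<le> r" "r < 9" for r :: int
  proof -
    have "r = 0 \<or> r = 1 \<or> r = 2 \<or> r = 3 \<or> r = 4 \<or> r = 5 \<or> r = 6 \<or> r = 7 \<or> r = 8" using that by arith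
    then show ?thesis by (elim disjE) simp_all
  qed
qed simp

lemma dA5: "(5::int) dvd q^2*(q^2-1)*(q^2-4)"
proof (rule dvd_by_res[where f = "\<lambda>Q. Q^2*(Q^2-1)*(Q^2-4)"])
  show "[x^2*(x^2-1)*(x^2-4) = y^2*(y^2-1)*(y^2-4)] (mod 5)" if "[x = y] (mod 5)" for x y :: int
    using that by (intro cong_mult cong_diff cong_pow cong_refl)
  show "(r^2*(r^2-1)*(r^2-4)) mod 5 = 0" if "0 \<le> r" "r < 5" for r :: int
  proof -
    have "r = 0 \<or> r = 1 \<or> r = 2 \<or> r = 3 \<or> r = 4" using that by arith
    then show ?thesis by (elim disjE) simp_all
  qed
qed simp

lemma dB4: "(4::int) dvd q^2*(q^4-1)"
proof (rule dvd_by_res[where f = "\<lambda>Q. Q^2*(Q^4-1)"])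
  show "[x^2*(x^4-1) = y^2*(y^4-1)] (mod 4)" if "[x = y] (mod 4)" for x y :: int
    using that by (intro cong_mult cong_diff cong_pow cong_refl)
  show "(r^2*(r^4-1)) mod 4 = 0" if "0 \<le> r" "r < 4" for r :: int
  proof -
    have "r = 0 \<or> r = 1 \<or> r = 2 \<or> r = 3" using that by arith
    then show ?thesis by (elim disjE) simp_all
  qed
qed simp

lemma dB3: "(3::int) dvd q^2*(q^4-1)"
proof (rule dvd_by_res[where f = "\<lambda>Q. Q^2*(Q^4-1)"])
  show "[x^2*(x^4-1) = y^2*(y^4-1)] (mod 3)" if "[x = y] (mod 3)" for x y :: int
    using that by (intro cong_mult cong_diff cong_pow cong_refl)
  show "(r^2*(r^4-1)) mod 3 = 0" if "0 \<le> r" "r < 3" for r :: int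
  proof -
    have "r = 0 \<or> r = 1 \<or> r = 2" using that by arith
    then show ?thesis by (elim disjE) simp_all
  qed
qed simp

lemma dB5: "(5::int) dvd q^2*(q^4-1)"
proof (rule dvd_by_res[where f = "\<lambda>Q. Q^2*(Q^4-1)"])
  show "[x^2*(x^4-1) = y^2*(y^4-1)] (mod 5)" if "[x = y] (mod 5)" for x y :: int
    using that by (intro cong_mult cong_diff cong_pow cong_refl)
  show "(r^2*(r^4-1)) mod 5 = 0" if "0 \<le> r" "r < 5" for r :: int
  proof -
    have "r = 0 \<or> r = 1 \<or> r = 2 \<or> r = 3 \<or> r = 4" using that by arith
    then show ?thesis by (elim disjE) simp_all
  qed
qed simp

lemma dC4: "(4::int) dvd q^2*(q^2-1)"
proof (rule dvd_by_res[where f = "\<lambda>Q. Q^2*(Q^2-1)"])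
  show "[x^2*(x^2-1) = y^2*(y^2-1)] (mod 4)" if "[x = y] (mod 4)" for x y :: int
    using that by (intro cong_mult cong_diff cong_pow cong_refl)
  show "(r^2*(r^2-1)) mod 4 = 0" if "0 \<le> r" "r < 4" for r :: int
  proof -
    have "r = 0 \<or> r = 1 \<or> r = 2 \<or> r = 3" using that by arith
    then show ?thesis by (elim disjE) simp_all
  qed
qed simp

lemma dC3: "(3::int) dvd q^2*(q^2-1)"
proof (rule dvd_by_res[where f = "\<lambda>Q. Q^2*(Q^2-1)"])
  show "[x^2*(x^2-1) = y^2*(y^2-1)] (mod 3)" if "[x = y] (mod 3)" for x y :: int
    using that by (intro cong_mult cong_diff cong_pow cong_refl)
  show "(r^2*(r^2-1)) mod 3 = 0" if "0 \<le> r" "r < 3" for r :: int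
  proof -
    have "r = 0 \<or> r = 1 \<or> r = 2" using that by arith
    then show ?thesis by (elim disjE) simp_all
  qed
qed simp

lemma dA: "(360::int) dvd q^2*(q^2-1)*(q^2-4)"
  using dA8[of q] dA9[of q] dA5[of q] by presburger

lemma dB: "(60::int) dvd q^2*(q^4-1)"
  using dB4[of q] dB3[of q] dB5[of q] by presburger

lemma dC: "(12::int) dvd q^2*(q^2-1)"
  using dC4[of q] dC3[of q] by presburger


definition g12 :: "int \<Rightarrow> int" where "g12 q = q^2*(q^2-1) div 12"
definition u60 :: "int \<Rightarrow> int" where "u60 q = q^2*(q^4-1) div 60"
definition w360 :: "int \<Rightarrow> int" where "w360 q = q^2*(q^2-1)*(q^2-4) div 360"

lemma g12e: "12 * g12 q = q^2*(q^2-1)" unfolding g12_def using dC[of q] by simp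
lemma u60e: "60 * u60 q = q^2*(q^4-1)" unfolding u60_def using dB[of q] by simp
lemma w360e: "360 * w360 q = q^2*(q^2-1)*(q^2-4)" unfolding w360_def using dA[of q] by simp

lemma S_form: "struct_S k d2 p = tp (int p^2, k * g12 (int p), u60 (int p) * d2 + k^2 * w360 (int p))"
proof -
  define q where "q = int p"
  have c: "(k * q^2 * (q^2 - 1)) div 12 = k * g12 q"
    unfolding g12_def using div_mult_swap[OF dC[of q], of k] by (simp add: mult.assoc)
  have d1: "(q^2 * (q^4 - 1) * d2) div 60 = u60 q * d2"
    unfolding u60_def using dvd_div_mult[OF dB[of q], of d2] by simp
  have d3: "(k^2 * q^2 * (q^2 - 1) * (q^2 - 4)) div 360 = k^2 * w360 q"
    unfolding w360_def using div_mult_swap[OF dA[of q], of "k^2"] by (simp add: mult.assoc)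
  have two: "u60 2 = 1" "w360 2 = 0" by (simp_all add: u60_def w360_def)
  show ?thesis
    unfolding struct_S_def Let_def q_def[symmetric] c d1 d3
    using two by (cases "p = 2") (simp_all add: q_def)
qed

lemma pdvd:
  assumes p: "prime p" and "p \<noteq> 2" "p \<noteq> 3" "p \<noteq> 5" and h: "int p dvd (360::int) * x"
  shows "int p dvd x"
proof -
  have pi: "prime (int p)" using p by simp
  have "(360::int) * x = 2 * (2 * (2 * (3 * (3 * (5 * x)))))" by simp
  then have "int p dvd 2 * (2 * (2 * (3 * (3 * (5 * x)))))" using h by simp
  then have "int p dvd 2 \<or> int p dvd 3 \<or> int p dvd 5 \<or> int p dvd x"
    by (simp only: prime_dvd_mult_iff[OF pi]) blast
  moreover have "\<not> int p dvd 2" "\<not> int p dvd 3" "\<not> int p dvd 5"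
  proof -
    have p1: "p > 1" using prime_gt_1_nat[OF p] .
    show "\<not> int p dvd 2"
    proof
      assume "int p dvd 2" then have "p dvd 2" by (metis int_dvd_int_iff of_nat_numeral)
      then have "p \<le> 2" by (simp add: dvd_imp_le)
      then show False using p1 assms by auto
    qed
    show "\<not> int p dvd 3"
    proof
      assume "int p dvd 3" then have "p dvd 3" by (metis int_dvd_int_iff of_nat_numeral)
      then have "p \<le> 3" by (simp add: dvd_imp_le)
      then show False using p1 assms by auto
    qed
    show "\<not> int p dvd 5"
    proof
      assume "int p dvd 5" then have d: "p dvd 5" by (metis int_dvd_int_iff of_nat_numeral)
      then have "p \<le> 5" by (simp add: dvd_imp_le)
      then have "p = 4" using p1 assms by auto
      then show False using d by simp
    qed
  qed
  ultimately show ?thesis by blast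
qed

lemma S_comm:
  fixes P Q k d2 gp gq up uq wp wq :: int
  assumes h: "12*gp = P*(P-1)" "12*gq = Q*(Q-1)" "60*up = P*(P^2-1)" "60*uq = Q*(Q^2-1)"
    "360*wp = P*(P-1)*(P-4)" "360*wq = Q*(Q-1)*(Q-4)"
  shows "cmp (Q, k*gq, uq*d2 + k^2*wq) (P, k*gp, up*d2+k^2*wp) = cmp (P, k*gp, up*d2+k^2*wp) (Q, k*gq, uq*d2 + k^2*wq)"
proof -
  have e2: "12 * (Q*(k*gp) + k*gq*P^2) = 12 * (P*(k*gq) + k*gp*Q^2)" using h by algebra
  have e3: "P*(uq*d2+k^2*wq) + 2*(k*gp)*Q*(k*gq) + (up*d2+k^2*wp)*Q^3 = Q*(up*d2+k^2*wp) + 2*(k*gq)*P*(k*gp) + (uq*d2+k^2*wq)*P^3"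
    by (rule S_comm_id[OF h])
  show ?thesis using e2 e3 by (simp add: algebra_simps)
qed



lemma S_gen:
  assumes p: "prime p" and ne: "p \<noteq> 2" "p \<noteq> 3" "p \<noteq> 5"
  shows "int p dvd g12 (int p) \<and> int p dvd u60 (int p) \<and> int p dvd w360 (int p)"
proof -
  define q where "q = int p"
  have a: "360 * g12 q = q * (30 * q * (q^2 - 1))"
  proof -
    have "360 * g12 q = 30 * (12 * g12 q)" by simp
    also have "\<dots> = q * (30 * q * (q^2 - 1))" unfolding g12e by algebra
    finally show ?thesis .
  qed
  have b: "360 * u60 q = q * (6 * q * (q^4 - 1))"
  proof -
    have "360 * u60 q = 6 * (60 * u60 q)" by simp
    also have "\<dots> = q * (6 * q * (q^4 - 1))" unfolding u60e by algebra
    finally show ?thesis .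
  qed
  have c: "360 * w360 q = q * (q * (q^2 - 1) * (q^2 - 4))" unfolding w360e by algebra
  have "int p dvd 360 * g12 q" by (subst a) (unfold q_def, rule dvd_triv_left)
  moreover have "int p dvd 360 * u60 q" by (subst b) (unfold q_def, rule dvd_triv_left)
  moreover have "int p dvd 360 * w360 q" by (subst c) (unfold q_def, rule dvd_triv_left)
  ultimately show ?thesis using pdvd[OF p ne] unfolding q_def by blast
qed


lemma S_c2:
  assumes p: "prime p" and k: "k = 1 \<or> k = 5"
  shows "(k * g12 (int p)) mod int p = (if p = 2 then 1 else 0) mod int p"
proof -
  consider "p = 2" | "p = 3" | "p = 5" | "p \<noteq> 2 \<and> p \<noteq> 3 \<and> p \<noteq> 5" by blast
  then show ?thesis
  proof cases
    case 1
    have "g12 2 = 1" by (simp add: g12_def)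
    then show ?thesis using 1 k by auto
  next
    case 2
    have "g12 3 = 6" by (simp add: g12_def)
    then show ?thesis using 2 k by auto
  next
    case 3
    have "g12 5 = 50" by (simp add: g12_def)
    then show ?thesis using 3 k by auto
  next
    case 4
    then have "int p dvd g12 (int p)" using S_gen[OF p] by blast
    then have "int p dvd k * g12 (int p)" by (rule dvd_mult)
    then have "(k * g12 (int p)) mod int p = 0" by (rule dvd_imp_mod_0)
    then show ?thesis using 4 by simp
  qed
qed

lemma S_c3:
  assumes p: "prime p" and k: "k = 1 \<or> k = 5" and d2: "even d2"
  shows "(u60 (int p) * d2 + k^2 * w360 (int p)) mod int p = (if p = 3 then 1 else 0) mod int p"
proof -
  consider "p = 2" | "p = 3" | "p = 5" | "p \<noteq> 2 \<and> p \<noteq> 3 \<and> p \<noteq> 5" by blast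
  then show ?thesis
  proof cases
    case 1
    have "u60 2 = 1" "w360 2 = 0" by (simp_all add: u60_def w360_def)
    then show ?thesis using 1 d2 by auto
  next
    case 2
    have "u60 3 = 12" "w360 3 = 1" by (simp_all add: u60_def w360_def)
    moreover have "(12 * d2 + 1) mod 3 = 1" "(12 * d2 + 25) mod 3 = 1" by presburger+
    ultimately show ?thesis using 2 k by auto
  next
    case 3
    have "u60 5 = 260" "w360 5 = 35" by (simp_all add: u60_def w360_def)
    moreover have "(260 * d2 + 35) mod 5 = 0" "(260 * d2 + 875) mod 5 = 0" by presburger+
    ultimately show ?thesis using 3 k by auto
  next
    case 4
    then have a: "int p dvd u60 (int p)" and b: "int p dvd w360 (int p)" using S_gen[OF p] by blast+
    have "int p dvd u60 (int p) * d2 + k^2 * w360 (int p)"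
      by (rule dvd_add) (rule dvd_mult2[OF a], rule dvd_mult[OF b])
    then have "(u60 (int p) * d2 + k^2 * w360 (int p)) mod int p = 0" by (rule dvd_imp_mod_0)
    then show ?thesis using 4 by simp
  qed
qed


lemma coeff_tp: "coeff (tp (a,b,c)) i = (if i = 1 then a else if i = 2 then b else if i = 3 then c else 0)"
  by (simp add: coeff_list4)

lemma S_ls:
  assumes k: "k = 1 \<or> k = 5" and d2: "even d2"
  shows "lam_struct (struct_S k d2)"
  unfolding lam_struct_def
proof (intro conjI allI impI)
  fix p :: nat assume p: "prime p"
  have p1: "p > 1" using prime_gt_1_nat[OF p] .
  have "struct_S k d2 p \<in> carrier4" unfolding S_form by (rule tp_carrier)
  then show "degree (struct_S k d2 p) < 4" by (simp add: carrier4_def)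
  show "coeff (struct_S k d2 p) 0 = 0" unfolding S_form coeff_tp by simp
  {
    fix i :: nat assume i: "i < 4"
    have m: "coeff (monom 1 p :: int poly) i = (if p = i then 1 else 0)" by (simp add: coeff_monom)
    have c1: "(int p ^ 2) mod int p = 0" by (simp add: power2_eq_square)
    have "i = 0 \<or> i = 1 \<or> i = 2 \<or> i = 3" using i by auto
    then show "coeff (struct_S k d2 p) i mod int p = coeff (monom 1 p :: int poly) i mod int p"
    proof (elim disjE)
      assume "i = 0" then show ?thesis using p1 unfolding S_form coeff_tp m by simp
    next
      assume "i = 1" then show ?thesis using p1 c1 unfolding S_form coeff_tp m by simp
    next
      assume i2: "i = 2"
      have "coeff (struct_S k d2 p) i = k * g12 (int p)" unfolding S_form coeff_tp i2 by simp
      then show ?thesis using S_c2[OF p k] unfolding m i2 by (simp add: eq_commute[of 2 p])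
    next
      assume i3: "i = 3"
      have "coeff (struct_S k d2 p) i = u60 (int p) * d2 + k^2 * w360 (int p)" unfolding S_form coeff_tp i3 by simp
      then show ?thesis using S_c3[OF p k d2] unfolding m i3 by (simp add: eq_commute[of 3 p])
    qed
  }
next
  fix p p' :: nat assume p: "prime p" and p': "prime p'"
  have h1: "12*g12 (int p) = (int p^2)*((int p^2)-1)" by (rule g12e)
  have h2: "12*g12 (int p') = (int p'^2)*((int p'^2)-1)" by (rule g12e)
  have h3: "60*u60 (int p) = (int p^2)*((int p^2)^2-1)" using u60e[of "int p"] by algebra
  have h4: "60*u60 (int p') = (int p'^2)*((int p'^2)^2-1)" using u60e[of "int p'"] by algebra
  have h5: "360*w360 (int p) = (int p^2)*((int p^2)-1)*((int p^2)-4)" by (rule w360e)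
  have h6: "360*w360 (int p') = (int p'^2)*((int p'^2)-1)*((int p'^2)-4)" by (rule w360e)
  note h = h1 h2 h3 h4 h5 h6
  note cm = S_comm[OF h, of k d2]
  show "adams_op (struct_S k d2 p) (struct_S k d2 p') = adams_op (struct_S k d2 p') (struct_S k d2 p)"
    unfolding S_form adams_Fp Fp_tp by (rule arg_cong[where f = tp, OF cm])
qed


lemma S_two: "struct_S k d2 2 = tp (4, k, d2)"
proof -
  have "g12 2 = 1" "u60 2 = 1" "w360 2 = 0" by (simp_all add: g12_def u60_def w360_def)
  then show ?thesis unfolding S_form by simp
qed

lemma S_tp: "struct_S k d2 p = tp (trip (struct_S k d2 p))"
  by (simp only: S_form trip_tp)

lemma S_noniso:
  assumes d: "d \<ge> 1" and k: "k = 1 \<or> k = 5" and k': "k' = 1 \<or> k' = 5"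
    and r: "0 \<le> d2" "d2 \<le> 58" and r': "0 \<le> d2'" "d2' \<le> 58" and ne: "(k, d2) \<noteq> (k', d2')"
  shows "\<not> lam_iso d (struct_S k d2) (struct_S k' d2')"
proof
  assume iso: "lam_iso d (struct_S k d2) (struct_S k' d2')"
  obtain e a b where e: "e = 1 \<or> e = -1" and h: "\<forall>p. prime p \<longrightarrow>
      cmp (trip (struct_S k d2 p)) (e,a,b) = cmp (e,a,b) (trip (struct_S k' d2' p))"
    using iso_D[OF iso d, of "\<lambda>p. trip (struct_S k d2 p)" "\<lambda>p. trip (struct_S k' d2' p)"] S_tp by blast
  have "cmp (4, k, d2) (e,a,b) = cmp (e,a,b) (4, k', d2')"
    using h[rule_format, OF two_is_prime_nat] unfolding S_two trip_tp .
  then have E1: "4*a + k*e^2 = e*k' + 16*a" and E2: "4*b + 2*k*e*a + d2*e^3 = e*d2' + 8*a*k' + 64*b"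
    by (simp_all add: algebra_simps)
  from e show False
  proof
    assume e1: "e = 1"
    then have "4*a + k = k' + 16*a" using E1 by simp
    then have a0: "a = 0" using k k' by presburger
    then have "4*b + d2 = d2' + 64*b" using E2 e1 by simp
    moreover have "k \<noteq> k' \<or> d2 \<noteq> d2'" using ne by simp
    ultimately show False using r r' a0 \<open>4*a + k = k' + 16*a\<close> by presburger
  next
    assume e1: "e = -1"
    then have "4*a + k = - k' + 16*a" using E1 by simp
    then show False using k k' by presburger
  qed
qed


lemma S_class:
  assumes R: "lam_struct R" and h: "\<forall>p. prime p \<longrightarrow> coeff (R p) 1 = int p ^ 2"
  shows "\<exists>k d2. k \<in> {1, 5} \<and> d2 \<in> {0..58} \<and> even d2 \<and> lam_iso d R (struct_S k d2)"
proof -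
  have t2: "prime (2::nat)" and t3: "prime (3::nat)" by simp_all
  define c where "c = coeff (R 2) 2"
  define dd where "dd = coeff (R 2) 3"
  define c3 where "c3 = coeff (R 3) 2"
  define d3 where "d3 = coeff (R 3) 3"
  have a2: "coeff (R 2) 1 = 4" using h t2 by simp
  have a3: "coeff (R 3) 1 = 9" using h t3 by simp
  have s2: "trip (R 2) = (4, c, dd)" using a2 by (simp add: trip_def c_def dd_def)
  have s3: "trip (R 3) = (9, c3, d3)" using a3 by (simp add: trip_def c3_def d3_def)
  have "cmp (9, c3, d3) (4, c, dd) = cmp (4, c, dd) (9, c3, d3)"
    using ls_comm[OF R t3 t2] unfolding s2 s3 .
  then have E1: "9*c + c3*16 = 4*c3 + c*81" and E2: "9*dd + 2*c3*4*c + d3*64 = 4*d3 + 2*c*9*c3 + dd*729"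
    by simp_all
  have c3e: "c3 = 6*c" using E1 by simp
  have "60 * d3 = 60 * (12*dd + c^2)" using E2 unfolding c3e by (simp add: power2_eq_square algebra_simps)
  then have d3e: "d3 = 12*dd + c^2" by simp
  have cm: "c mod 2 = 1" using ls_cong[OF R t2, of 2] by (simp add: c_def)
  have dm: "dd mod 2 = 0" using ls_cong[OF R t2, of 3] by (simp add: dd_def)
  have d3m: "d3 mod 3 = 1" using ls_cong[OF R t3, of 3] by (simp add: d3_def)
  have c3m: "c mod 3 \<noteq> 0"
  proof
    assume "c mod 3 = 0"
    then obtain t where "c = 3*t" by (metis dvd_def mod_0_imp_dvd)
    then have "d3 = 12*dd + 9*(t^2)" using d3e by (simp add: power2_eq_square)
    then show False using d3m by presburger
  qed
  have "\<exists>a. c = 1 + 12*a \<or> c = 5 + 12*a \<or> c = -5 + 12*a \<or> c = -1 + 12*a" using cm c3m by presburger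
  then obtain e k a where e: "e = 1 \<or> e = -1" and k: "k = 1 \<or> k = 5" and ca: "c = e*k + 12*a"
    by (metis mult_1 mult_minus1 add.commute)
  obtain d' where dd': "dd = 2*d'" using dm by (metis dvd_def mod_0_imp_dvd)
  define W where "W = d' + c*a - 4*e*a*k"
  define Z where "Z = 2*W"
  have Ze: "Z = dd + 2*c*a - 8*e*a*k" by (simp add: Z_def W_def dd' algebra_simps)
  define d2 where "d2 = Z mod 60"
  define b where "b = e * (Z div 60)"
  have Zd: "Z = 60 * (Z div 60) + d2" by (simp add: d2_def)
  have d2ev: "even d2" unfolding d2_def Z_def by presburger
  have d2r: "d2 \<in> {0..58}"
  proof -
    have "0 \<le> d2" "d2 < 60" by (simp_all add: d2_def)
    then show ?thesis using d2ev by (simp add: atLeastAtMost_iff) presburger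
  qed
  have kk: "k \<in> {1,5}" using k by auto
  have iso: "lam_iso d R (struct_S k d2)"
  proof (rule norm_iso_ls[OF R S_ls[OF k d2ev] e, where a = a and b = b])
    show "\<forall>p. prime p \<longrightarrow> coeff (R p) 1 = coeff (struct_S k d2 p) 1"
      using h unfolding S_form coeff_tp by simp
    show "coeff (R 2) 1 - (coeff (R 2) 1)^2 \<noteq> 0" "coeff (R 2) 1 - (coeff (R 2) 1)^3 \<noteq> 0"
      unfolding a2 by simp_all
    show "cmp (trip (R 2)) (e, a, b) = cmp (e, a, b) (trip (struct_S k d2 2))"
      unfolding s2 S_two trip_tp
    proof -
      from e show "cmp (4, c, dd) (e, a, b) = cmp (e, a, b) (4, k, d2)"
      proof
        assume e1: "e = 1"
        have x1: "4*a + c = k + 16*a" using ca e1 by simp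
        have x2: "4*b + 2*c*a + dd = d2 + 8*a*k + 64*b" using Zd Ze e1 unfolding b_def by algebra
        show ?thesis using x1 x2 e1 by (simp add: algebra_simps)
      next
        assume e1: "e = -1"
        have x1: "4*a + c = -k + 16*a" using ca e1 by simp
        have x2: "4*b - 2*c*a - dd = - d2 + 8*a*k + 64*b" using Zd Ze e1 unfolding b_def by algebra
        show ?thesis using x1 x2 e1 by (simp add: algebra_simps)
      qed
    qed
  qed
  show ?thesis using kk d2r d2ev iso by blast
qed


theorem theorem1p6:
  fixes d :: nat
  assumes "d \<ge> 1"
  shows
  "(\<forall>R. lam_struct R \<and> (\<forall>p. prime p \<longrightarrow> coeff (R p) 1 = int p) \<longrightarrow>
        lam_struct struct_mult \<and> lam_iso d R struct_mult)
   \<and>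
   ((\<forall>k d2. k \<in> {1, 5} \<and> d2 \<in> {0..58} \<and> even d2 \<longrightarrow> lam_struct (struct_S k d2)) \<and>
    (\<forall>k d2 k' d2'. k \<in> {1, 5} \<and> d2 \<in> {0..58} \<and> even d2 \<and>
        k' \<in> {1, 5} \<and> d2' \<in> {0..58} \<and> even d2' \<and> (k, d2) \<noteq> (k', d2') \<longrightarrow>
        \<not> lam_iso d (struct_S k d2) (struct_S k' d2')) \<and>
    (\<forall>R. lam_struct R \<and> (\<forall>p. prime p \<longrightarrow> coeff (R p) 1 = int p ^ 2) \<longrightarrow>
        (\<exists>k d2. k \<in> {1, 5} \<and> d2 \<in> {0..58} \<and> even d2 \<and> lam_iso d R (struct_S k d2))))
   \<and>
   (\<forall>R. lam_struct R \<and> (\<forall>p. prime p \<longrightarrow> coeff (R p) 1 \<noteq> 0) \<longrightarrow>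
        (\<exists>F. finite F \<and>
           (\<forall>S. lam_struct S \<and> (\<forall>p. prime p \<longrightarrow> coeff (S p) 1 = coeff (R p) 1) \<longrightarrow>
                (\<exists>T\<in>F. lam_iso d S T))))
   \<and>
   ((\<forall>R. lam_struct R \<and> coeff (R 2) 1 = 0 \<longrightarrow>
        (\<exists>c e. \<forall>p. prime p \<longrightarrow> R p = struct_cd c e p)) \<and>
    (\<forall>c e. adams_cong (struct_cd c e) \<longrightarrow> lam_struct (struct_cd c e)) \<and>
    (\<forall>c e cb eb. adams_cong (struct_cd c e) \<and> adams_cong (struct_cd cb eb) \<longrightarrow>
        (lam_iso d (struct_cd c e) (struct_cd cb eb) \<longleftrightarrow>
           (((\<forall>p. prime p \<longrightarrow> cb p = c p) \<or> (\<forall>p. prime p \<longrightarrow> cb p = - c p)) \<and>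
            (\<exists>\<alpha>::int. \<forall>p. prime p \<longrightarrow> eb p = e p + 2 * c p * \<alpha>)))))"
proof -
  have P1: "\<forall>R. lam_struct R \<and> (\<forall>p. prime p \<longrightarrow> coeff (R p) 1 = int p) \<longrightarrow>
        lam_struct struct_mult \<and> lam_iso d R struct_mult"
    using M_ls part1 by blast
  have P2a: "\<forall>k d2. k \<in> {1, 5} \<and> d2 \<in> {0..58} \<and> even d2 \<longrightarrow> lam_struct (struct_S k d2)"
    using S_ls by blast
  have P2b: "\<forall>k d2 k' d2'. k \<in> {1, 5} \<and> d2 \<in> {0..58} \<and> even d2 \<and>
        k' \<in> {1, 5} \<and> d2' \<in> {0..58} \<and> even d2' \<and> (k, d2) \<noteq> (k', d2') \<longrightarrow>
        \<not> lam_iso d (struct_S k d2) (struct_S k' d2')"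
  proof (intro allI impI)
    fix k d2 k' d2' :: int
    assume a: "k \<in> {1, 5} \<and> d2 \<in> {0..58} \<and> even d2 \<and>
        k' \<in> {1, 5} \<and> d2' \<in> {0..58} \<and> even d2' \<and> (k, d2) \<noteq> (k', d2')"
    show "\<not> lam_iso d (struct_S k d2) (struct_S k' d2')"
      by (rule S_noniso[OF assms]) (use a in auto)
  qed
  have P2c: "\<forall>R. lam_struct R \<and> (\<forall>p. prime p \<longrightarrow> coeff (R p) 1 = int p ^ 2) \<longrightarrow>
        (\<exists>k d2. k \<in> {1, 5} \<and> d2 \<in> {0..58} \<and> even d2 \<and> lam_iso d R (struct_S k d2))"
    using S_class by blast
  have P3: "\<forall>R. lam_struct R \<and> (\<forall>p. prime p \<longrightarrow> coeff (R p) 1 \<noteq> 0) \<longrightarrow>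
        (\<exists>F. finite F \<and>
           (\<forall>S. lam_struct S \<and> (\<forall>p. prime p \<longrightarrow> coeff (S p) 1 = coeff (R p) 1) \<longrightarrow>
                (\<exists>T\<in>F. lam_iso d S T)))"
    using part3 by blast
  have P4: "(\<forall>R. lam_struct R \<and> coeff (R 2) 1 = 0 \<longrightarrow>
        (\<exists>c e. \<forall>p. prime p \<longrightarrow> R p = struct_cd c e p)) \<and>
    (\<forall>c e. adams_cong (struct_cd c e) \<longrightarrow> lam_struct (struct_cd c e)) \<and>
    (\<forall>c e cb eb. adams_cong (struct_cd c e) \<and> adams_cong (struct_cd cb eb) \<longrightarrow>
        (lam_iso d (struct_cd c e) (struct_cd cb eb) \<longleftrightarrow>
           (((\<forall>p. prime p \<longrightarrow> cb p = c p) \<or> (\<forall>p. prime p \<longrightarrow> cb p = - c p)) \<and>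
            (\<exists>\<alpha>::int. \<forall>p. prime p \<longrightarrow> eb p = e p + 2 * c p * \<alpha>))))"
    using part4a part4b part4c[OF assms] by blast
  show ?thesis using P1 P2a P2b P2c P3 P4 by blast
qed

end
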